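(* Let $B$ be a commutative ring with identity and $A$ a dense subring of $B$. Then every minimal prime ideal of $A$ is of the form $Q\cap A$ for a unique minimal prime ideal $Q$ of $B$; and conversely, for every minimal prime ideal $Q$ of $B$, $Q\cap A$ is a minimal prime ideal of $A$.
   Context: All rings are commutative with identity; subrings contain the identity. A subring $A$ of $B$ is dense in $B$ if for every ideal $I$ of $B$ and every $b\in B\setminus \operatorname{rad}(I)$ there exists $a\in B\setminus\operatorname{rad}(I)$ with $ab\in A$. *)

theory Defs
  imports "HOL-Algebra.Algebra"
begin

definition rad_ideal :: "('a, 'b) ring_scheme \<Rightarrow> 'a set \<Rightarrow> 'a set" where
  "rad_ideal R I = {x \<in> carrier R. \<exists>n::nat. x [^]\<^bsub>R\<^esub> n \<in> I}"

definition minimal_prime :: "'a set \<Rightarrow> ('a, 'b) ring_scheme \<Rightarrow> bool" where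
  "minimal_prime P R \<longleftrightarrow> primeideal P R \<and> (\<forall>Q. primeideal Q R \<and> Q \<subseteq> P \<longrightarrow> Q = P)"

definition dense_subring :: "'a set \<Rightarrow> ('a, 'b) ring_scheme \<Rightarrow> bool" where
  "dense_subring A B \<longleftrightarrow> subring A B \<and>
     (\<forall>I. ideal I B \<longrightarrow> (\<forall>b \<in> carrier B - rad_ideal B I.
        \<exists>a \<in> carrier B - rad_ideal B I. a \<otimes>\<^bsub>B\<^esub> b \<in> A))"

end

theory Submission imports Defs begin

lemma prime_pow:
  assumes "primeideal Q R" "x \<in> carrier R" "x [^]\<^bsub>R\<^esub> (n::nat) \<in> Q"
  shows "x \<in> Q"
  using assms(3)
proof (induction n)
  case 0
  interpret primeideal Q R by fact
  from 0 have "\<one>\<^bsub>R\<^esub> \<in> Q" by simp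
  then have "Q = carrier R" by (rule one_imp_carrier)
  then show ?case using I_notcarr by simp
next
  case (Suc n)
  interpret primeideal Q R by fact
  have "x [^]\<^bsub>R\<^esub> n \<otimes>\<^bsub>R\<^esub> x \<in> Q" using Suc.prems by simp
  then have "x [^]\<^bsub>R\<^esub> n \<in> Q \<or> x \<in> Q" using I_prime assms(2) by simp
  then show ?case using Suc.IH by blast
qed

lemma contract_prime:
  assumes "cring B" "subring A B" "primeideal Q B"
  shows "primeideal (Q \<inter> A) (B\<lparr>carrier := A\<rparr>)"
proof -
  interpret B: cring B by fact
  have Asub: "A \<subseteq> carrier B" using assms(2) by (rule subringE(1))
  have cA: "cring (B\<lparr>carrier := A\<rparr>)"
    using B.subcring_iff[OF Asub] B.subcringI'[OF assms(2)] by simp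
  have rA: "ring (B\<lparr>carrier := A\<rparr>)" using cA by (simp add: cring_def)
  have hom: "ring_hom_ring (B\<lparr>carrier := A\<rparr>) B id"
  proof (rule ring_hom_ringI2[OF rA B.ring_axioms])
    show "id \<in> ring_hom (B\<lparr>carrier := A\<rparr>) B"
      by (rule ring_hom_memI) (use Asub in auto)
  qed
  have "primeideal {r \<in> carrier (B\<lparr>carrier := A\<rparr>). id r \<in> Q} (B\<lparr>carrier := A\<rparr>)"
    using ring_hom_ring.primeideal_vimage[OF hom cA assms(3)] .
  moreover have "{r \<in> carrier (B\<lparr>carrier := A\<rparr>). id r \<in> Q} = Q \<inter> A" by auto
  ultimately show ?thesis by simp
qed

lemma prime_avoid:
  assumes "cring R" "S \<subseteq> carrier R" "\<one>\<^bsub>R\<^esub> \<in> S" "\<zero>\<^bsub>R\<^esub> \<notin> S"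
    and mc: "\<And>a b. a \<in> S \<Longrightarrow> b \<in> S \<Longrightarrow> a \<otimes>\<^bsub>R\<^esub> b \<in> S"
  shows "\<exists>Q. primeideal Q R \<and> Q \<inter> S = {}"
proof -
  interpret R: cring R by fact
  define AA where "AA = {I. ideal I R \<and> I \<inter> S = {}}"
  have "\<exists>M\<in>AA. \<forall>Y\<in>AA. M \<subseteq> Y \<longrightarrow> Y = M"
  proof (rule subset_Zorn)
    fix C assume C: "subset.chain AA C"
    have CA: "C \<subseteq> AA" using C by (simp add: pred_on.chain_def)
    have Cid: "\<forall>I\<in>C. ideal I R" and Cdis: "\<forall>I\<in>C. I \<inter> S = {}"
      using CA unfolding AA_def by blast+
    have C': "subset.chain {I. ideal I R} C"
      using C Cid unfolding pred_on.chain_def by blast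
    define U where "U = (if C = {} then {\<zero>\<^bsub>R\<^esub>} else \<Union>C)"
    have "ideal U R" unfolding U_def by (rule R.chain_Union_is_ideal[OF C'])
    moreover have "U \<inter> S = {}"
    proof (cases "C = {}")
      case True then show ?thesis using assms(4) by (simp add: U_def)
    next
      case False then show ?thesis using Cdis by (simp add: U_def) blast
    qed
    moreover have "\<forall>Y\<in>C. Y \<subseteq> U" by (simp add: U_def) blast
    ultimately have "U \<in> AA \<and> (\<forall>Y\<in>C. Y \<subseteq> U)" unfolding AA_def by simp
    then show "\<exists>U\<in>AA. \<forall>Y\<in>C. Y \<subseteq> U" by blast
  qed
  then obtain M where "M \<in> AA" and Mm: "\<forall>Y\<in>AA. M \<subseteq> Y \<longrightarrow> Y = M" by blast
  then have M: "ideal M R" "M \<inter> S = {}" unfolding AA_def by simp_all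
  have Mmax: "Y = M" if "ideal Y R" "Y \<inter> S = {}" "M \<subseteq> Y" for Y
    using Mm that unfolding AA_def by simp
  interpret M: ideal M R by fact
  have ext: "\<exists>m x. m \<in> M \<and> x \<in> carrier R \<and> m \<oplus>\<^bsub>R\<^esub> x \<otimes>\<^bsub>R\<^esub> a \<in> S"
    if a: "a \<in> carrier R" "a \<notin> M" for a
  proof -
    let ?J = "M <+>\<^bsub>R\<^esub> cgenideal R a"
    have J: "ideal ?J R" by (rule R.add_ideals[OF M(1) R.cgenideal_ideal[OF a(1)]])
    have MJ: "M \<subseteq> ?J"
    proof
      fix m assume m: "m \<in> M"
      have "m = m \<oplus>\<^bsub>R\<^esub> \<zero>\<^bsub>R\<^esub> \<otimes>\<^bsub>R\<^esub> a" using m a by simp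
      moreover have "\<zero>\<^bsub>R\<^esub> \<otimes>\<^bsub>R\<^esub> a \<in> cgenideal R a" unfolding cgenideal_def by blast
      ultimately show "m \<in> ?J" unfolding set_add_defs using m by auto
    qed
    have "a = \<zero>\<^bsub>R\<^esub> \<oplus>\<^bsub>R\<^esub> \<one>\<^bsub>R\<^esub> \<otimes>\<^bsub>R\<^esub> a" using a by simp
    moreover have "\<one>\<^bsub>R\<^esub> \<otimes>\<^bsub>R\<^esub> a \<in> cgenideal R a" unfolding cgenideal_def by blast
    ultimately have "a \<in> ?J" unfolding set_add_defs by auto
    then have "?J \<noteq> M" using a by blast
    then have "?J \<inter> S \<noteq> {}" using Mmax[OF J] MJ by blast
    then obtain s where "s \<in> ?J" "s \<in> S" by blast
    then show ?thesis unfolding set_add_defs cgenideal_def by auto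
  qed
  have "primeideal M R"
  proof (rule primeidealI[OF M(1) assms(1)])
    show "carrier R \<noteq> M" using M(2) assms(3) by auto
  next
    fix a b assume ab: "a \<in> carrier R" "b \<in> carrier R" "a \<otimes>\<^bsub>R\<^esub> b \<in> M"
    show "a \<in> M \<or> b \<in> M"
    proof (rule ccontr)
      assume "\<not> (a \<in> M \<or> b \<in> M)"
      then obtain m1 x m2 y where h: "m1 \<in> M" "x \<in> carrier R" "m1 \<oplus>\<^bsub>R\<^esub> x \<otimes>\<^bsub>R\<^esub> a \<in> S"
        "m2 \<in> M" "y \<in> carrier R" "m2 \<oplus>\<^bsub>R\<^esub> y \<otimes>\<^bsub>R\<^esub> b \<in> S"
        using ext ab by meson
      let ?s1 = "m1 \<oplus>\<^bsub>R\<^esub> x \<otimes>\<^bsub>R\<^esub> a" and ?s2 = "m2 \<oplus>\<^bsub>R\<^esub> y \<otimes>\<^bsub>R\<^esub> b"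
      have c: "m1 \<in> carrier R" "m2 \<in> carrier R" using h M.a_subset by auto
      have cs2: "?s2 \<in> carrier R" using c h ab by simp
      have e1: "?s1 \<otimes>\<^bsub>R\<^esub> ?s2 = m1 \<otimes>\<^bsub>R\<^esub> ?s2 \<oplus>\<^bsub>R\<^esub> (x \<otimes>\<^bsub>R\<^esub> a) \<otimes>\<^bsub>R\<^esub> ?s2"
        by (rule R.l_distr) (use c h ab cs2 in simp_all)
      have e2: "(x \<otimes>\<^bsub>R\<^esub> a) \<otimes>\<^bsub>R\<^esub> ?s2 = (x \<otimes>\<^bsub>R\<^esub> a) \<otimes>\<^bsub>R\<^esub> m2 \<oplus>\<^bsub>R\<^esub> (x \<otimes>\<^bsub>R\<^esub> a) \<otimes>\<^bsub>R\<^esub> (y \<otimes>\<^bsub>R\<^esub> b)"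
        by (rule R.r_distr) (use c h ab in simp_all)
      have e3: "(x \<otimes>\<^bsub>R\<^esub> a) \<otimes>\<^bsub>R\<^esub> (y \<otimes>\<^bsub>R\<^esub> b) = (x \<otimes>\<^bsub>R\<^esub> y) \<otimes>\<^bsub>R\<^esub> (a \<otimes>\<^bsub>R\<^esub> b)"
        using h ab by (metis R.m_assoc R.m_lcomm R.m_closed)
      have "?s1 \<otimes>\<^bsub>R\<^esub> ?s2 = m1 \<otimes>\<^bsub>R\<^esub> ?s2 \<oplus>\<^bsub>R\<^esub> ((x \<otimes>\<^bsub>R\<^esub> a) \<otimes>\<^bsub>R\<^esub> m2
           \<oplus>\<^bsub>R\<^esub> (x \<otimes>\<^bsub>R\<^esub> y) \<otimes>\<^bsub>R\<^esub> (a \<otimes>\<^bsub>R\<^esub> b))"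
        using e1 e2 e3 by simp
      moreover have "m1 \<otimes>\<^bsub>R\<^esub> ?s2 \<in> M" using h c ab by (simp add: M.I_r_closed)
      moreover have "(x \<otimes>\<^bsub>R\<^esub> a) \<otimes>\<^bsub>R\<^esub> m2 \<in> M" using h c ab by (simp add: M.I_l_closed)
      moreover have "(x \<otimes>\<^bsub>R\<^esub> y) \<otimes>\<^bsub>R\<^esub> (a \<otimes>\<^bsub>R\<^esub> b) \<in> M" using h c ab by (simp add: M.I_l_closed)
      ultimately have "?s1 \<otimes>\<^bsub>R\<^esub> ?s2 \<in> M" by (metis M.a_closed)
      moreover have "?s1 \<otimes>\<^bsub>R\<^esub> ?s2 \<in> S" using mc h by blast
      ultimately show False using M(2) by blast
    qed
  qed
  then show ?thesis using M(2) by blast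
qed


lemma prime_sub: "primeideal Q R \<Longrightarrow> Q \<subseteq> carrier R"
  using primeideal.axioms(1) ideal.axioms(1) additive_subgroup.a_subset by blast

lemma prime_one: "primeideal Q R \<Longrightarrow> \<one>\<^bsub>R\<^esub> \<notin> Q"
  using primeideal.axioms(1) ideal.one_imp_carrier primeideal.I_notcarr by metis

lemma chain_Inter_prime:
  assumes "cring R" "QQ \<noteq> {}" "\<forall>Q\<in>QQ. primeideal Q R"
    and ch: "\<forall>Q1\<in>QQ. \<forall>Q2\<in>QQ. Q1 \<subseteq> Q2 \<or> Q2 \<subseteq> Q1"
  shows "primeideal (\<Inter>QQ) R"
proof -
  interpret R: cring R by fact
  show ?thesis
  proof (rule primeidealI)
    show "ideal (\<Inter>QQ) R" using assms(2,3) R.i_Intersect primeideal.axioms(1) by metis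
    show "cring R" by fact
    obtain Q where "Q \<in> QQ" using assms(2) by blast
    then have "\<one>\<^bsub>R\<^esub> \<notin> \<Inter>QQ" using prime_one assms(3) by blast
    then show "carrier R \<noteq> \<Inter>QQ" by auto
  next
    fix a b assume ab: "a \<in> carrier R" "b \<in> carrier R" "a \<otimes>\<^bsub>R\<^esub> b \<in> \<Inter>QQ"
    show "a \<in> \<Inter>QQ \<or> b \<in> \<Inter>QQ"
    proof (rule ccontr)
      assume "\<not> ?thesis"
      then obtain Q1 Q2 where q: "Q1 \<in> QQ" "a \<notin> Q1" "Q2 \<in> QQ" "b \<notin> Q2" by blast
      have p1: "a \<in> Q1 \<or> b \<in> Q1" using primeideal.I_prime[of Q1 R a b] q ab assms(3) by blast
      have p2: "a \<in> Q2 \<or> b \<in> Q2" using primeideal.I_prime[of Q2 R a b] q ab assms(3) by blast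
      show False using ch q p1 p2 by blast
    qed
  qed
qed

lemma compl_sub: "A \<subseteq> C \<Longrightarrow> B \<subseteq> C \<Longrightarrow> C - A \<subseteq> C - B \<Longrightarrow> B \<subseteq> A" by blast

lemma min_prime_exists:
  assumes "cring R" "primeideal P R"
  shows "\<exists>Q. minimal_prime Q R \<and> Q \<subseteq> P"
proof -
  define AA where "AA = (\<lambda>Q. carrier R - Q) ` {Q. primeideal Q R \<and> Q \<subseteq> P}"
  have "\<exists>M\<in>AA. \<forall>Y\<in>AA. M \<subseteq> Y \<longrightarrow> Y = M"
  proof (rule subset_Zorn_nonempty)
    have "carrier R - P \<in> AA" unfolding AA_def using assms(2) by (intro imageI) simp
    then show "AA \<noteq> {}" by auto
  next
    fix CC assume ne: "CC \<noteq> {}" and C: "subset.chain AA CC"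
    have CA: "CC \<subseteq> AA" using C by (simp add: pred_on.chain_def)
    have Cch: "\<forall>Z\<in>CC. \<forall>Y\<in>CC. Z \<subseteq> Y \<or> Y \<subseteq> Z" using C unfolding subset_chain_def by blast
    define QQ where "QQ = {Q. primeideal Q R \<and> Q \<subseteq> P \<and> carrier R - Q \<in> CC}"
    have QQp: "\<forall>Q\<in>QQ. primeideal Q R" unfolding QQ_def by simp
    have QQs: "\<forall>Q\<in>QQ. Q \<subseteq> carrier R" using QQp prime_sub by metis
    have Cform: "\<exists>Q\<in>QQ. Z = carrier R - Q" if Z: "Z \<in> CC" for Z
    proof -
      have "Z \<in> AA" using Z CA by (rule subsetD[rotated])
      then obtain Q where Q: "primeideal Q R" "Q \<subseteq> P" "Z = carrier R - Q" unfolding AA_def by auto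
      then have "Q \<in> QQ" using Z unfolding QQ_def by simp
      then show ?thesis using Q(3) by (rule bexI[rotated])
    qed
    obtain Z0 where "Z0 \<in> CC" using ne by auto
    then obtain Q00 where Q00: "Q00 \<in> QQ" using Cform by auto
    then have QQne: "QQ \<noteq> {}" by auto
    have QQch: "\<forall>Q1\<in>QQ. \<forall>Q2\<in>QQ. Q1 \<subseteq> Q2 \<or> Q2 \<subseteq> Q1"
    proof (intro ballI)
      fix Q1 Q2 assume q: "Q1 \<in> QQ" "Q2 \<in> QQ"
      then have "carrier R - Q1 \<in> CC" "carrier R - Q2 \<in> CC" unfolding QQ_def by simp_all
      then have "carrier R - Q1 \<subseteq> carrier R - Q2 \<or> carrier R - Q2 \<subseteq> carrier R - Q1"
        using Cch by simp
      moreover have "Q1 \<subseteq> carrier R" "Q2 \<subseteq> carrier R" using QQs q by simp_all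
      ultimately show "Q1 \<subseteq> Q2 \<or> Q2 \<subseteq> Q1" using compl_sub by metis
    qed
    have pr: "primeideal (\<Inter>QQ) R" using chain_Inter_prime[OF assms(1) QQne QQp QQch] .
    have "Q00 \<subseteq> P" using Q00 unfolding QQ_def by simp
    then have sub: "\<Inter>QQ \<subseteq> P" using Q00 by (meson Inter_lower order_trans)
    have eq: "\<Union>CC = carrier R - \<Inter>QQ"
    proof
      show "\<Union>CC \<subseteq> carrier R - \<Inter>QQ"
      proof
        fix x assume "x \<in> \<Union>CC"
        then obtain Z where Z: "Z \<in> CC" "x \<in> Z" by auto
        then obtain Q where "Q \<in> QQ" "Z = carrier R - Q" using Cform by blast
        then show "x \<in> carrier R - \<Inter>QQ" using Z by auto
      qed
      show "carrier R - \<Inter>QQ \<subseteq> \<Union>CC"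
      proof
        fix x assume x: "x \<in> carrier R - \<Inter>QQ"
        then obtain Q where Q: "Q \<in> QQ" "x \<notin> Q" by auto
        then have "carrier R - Q \<in> CC" unfolding QQ_def by simp
        moreover have "x \<in> carrier R - Q" using x Q by simp
        ultimately show "x \<in> \<Union>CC" by (rule UnionI)
      qed
    qed
    have "carrier R - \<Inter>QQ \<in> AA" unfolding AA_def by (rule imageI) (simp add: pr sub)
    then show "\<Union>CC \<in> AA" unfolding eq .
  qed
  then obtain M where "M \<in> AA" and Mm: "\<forall>Y\<in>AA. M \<subseteq> Y \<longrightarrow> Y = M" by auto
  then obtain Q0 where Q0: "primeideal Q0 R" "Q0 \<subseteq> P" "M = carrier R - Q0" unfolding AA_def by auto
  have "minimal_prime Q0 R"
    unfolding minimal_prime_def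
  proof (intro conjI allI impI)
    show "primeideal Q0 R" by fact
    fix Q assume q: "primeideal Q R \<and> Q \<subseteq> Q0"
    have "Q \<subseteq> P" using q Q0(2) by auto
    then have "carrier R - Q \<in> AA" unfolding AA_def using q by (intro imageI) simp
    moreover have "M \<subseteq> carrier R - Q" using Q0(3) q by auto
    ultimately have e: "carrier R - Q = carrier R - Q0" using Mm Q0(3) by simp
    have "Q \<subseteq> carrier R" "Q0 \<subseteq> carrier R" using prime_sub q Q0(1) by auto
    then show "Q = Q0" using e compl_sub by (metis equalityI subset_refl)
  qed
  then show ?thesis using Q0(2) by auto
qed


theorem theorem3p6:
  fixes B :: "('a, 'b) ring_scheme" and A :: "'a set"
  assumes "cring B"
    and "dense_subring A B"
  shows "(\<forall>P. minimal_prime P (B\<lparr>carrier := A\<rparr>) \<longrightarrow>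
            (\<exists>!Q. minimal_prime Q B \<and> P = Q \<inter> A))
       \<and> (\<forall>Q. minimal_prime Q B \<longrightarrow> minimal_prime (Q \<inter> A) (B\<lparr>carrier := A\<rparr>))"
proof -
  interpret B: cring B by fact
  have sA: "subring A B" and dens: "\<And>I. ideal I B \<Longrightarrow> (\<forall>b \<in> carrier B - rad_ideal B I.
        \<exists>a \<in> carrier B - rad_ideal B I. a \<otimes>\<^bsub>B\<^esub> b \<in> A)"
    using assms(2) unfolding dense_subring_def by auto
  have AC: "A \<subseteq> carrier B" using sA by (rule subringE(1))
  have contr: "primeideal (Q \<inter> A) (B\<lparr>carrier := A\<rparr>)" if "primeideal Q B" for Q
    using contract_prime[OF assms(1) sA that] .
  have emb: "Q1 \<subseteq> Q2" if q: "primeideal Q1 B" "primeideal Q2 B" "Q1 \<inter> A \<subseteq> Q2 \<inter> A" for Q1 Q2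
  proof
    fix b assume b: "b \<in> Q1"
    show "b \<in> Q2"
    proof (rule ccontr)
      assume nb: "b \<notin> Q2"
      have bc: "b \<in> carrier B" using b prime_sub[OF q(1)] by blast
      have "b \<notin> rad_ideal B Q2"
      proof
        assume "b \<in> rad_ideal B Q2"
        then obtain n :: nat where "b [^]\<^bsub>B\<^esub> n \<in> Q2" unfolding rad_ideal_def by auto
        then have "b \<in> Q2" using prime_pow[OF q(2) bc] by blast
        then show False using nb by simp
      qed
      then have "b \<in> carrier B - rad_ideal B Q2" using bc by simp
      moreover have "ideal Q2 B" using q(2) by (rule primeideal.axioms(1))
      ultimately obtain a where a: "a \<in> carrier B" "a \<notin> rad_ideal B Q2" "a \<otimes>\<^bsub>B\<^esub> b \<in> A"
        using dens by blast
      have na: "a \<notin> Q2"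
      proof
        assume "a \<in> Q2"
        then have "a [^]\<^bsub>B\<^esub> (1::nat) \<in> Q2" using a(1) by simp
        then show False using a(1,2) unfolding rad_ideal_def by blast
      qed
      have "a \<otimes>\<^bsub>B\<^esub> b \<in> Q1"
        using ideal.I_l_closed[OF primeideal.axioms(1)[OF q(1)] b a(1)] .
      then have "a \<otimes>\<^bsub>B\<^esub> b \<in> Q2" using a(3) q(3) by blast
      then have "a \<in> Q2 \<or> b \<in> Q2" using primeideal.I_prime[OF q(2) a(1) bc] by blast
      then show False using na nb by blast
    qed
  qed
  have under: "\<exists>Q'. primeideal Q' B \<and> Q' \<inter> A \<subseteq> P" if P: "primeideal P (B\<lparr>carrier := A\<rparr>)" for P
  proof -
    have "\<one>\<^bsub>B\<lparr>carrier := A\<rparr>\<^esub> \<notin> P" using prime_one[OF P] .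
    then have one: "\<one>\<^bsub>B\<^esub> \<in> A - P" using subringE(3)[OF sA] by simp
    have "\<zero>\<^bsub>B\<lparr>carrier := A\<rparr>\<^esub> \<in> P"
      using additive_subgroup.zero_closed[OF ideal.axioms(1)[OF primeideal.axioms(1)[OF P]]] .
    then have zero: "\<zero>\<^bsub>B\<^esub> \<notin> A - P" by simp
    have mc: "a \<otimes>\<^bsub>B\<^esub> b \<in> A - P" if ab: "a \<in> A - P" "b \<in> A - P" for a b
    proof -
      have "a \<otimes>\<^bsub>B\<^esub> b \<in> A" using subringE(6)[OF sA] ab by blast
      moreover have "a \<otimes>\<^bsub>B\<^esub> b \<notin> P"
      proof
        assume "a \<otimes>\<^bsub>B\<^esub> b \<in> P"
        then have "a \<otimes>\<^bsub>B\<lparr>carrier := A\<rparr>\<^esub> b \<in> P" by simp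
        then have "a \<in> P \<or> b \<in> P"
          using primeideal.I_prime[OF P, of a b] ab by simp
        then show False using ab by blast
      qed
      ultimately show ?thesis by blast
    qed
    obtain Q' where "primeideal Q' B" "Q' \<inter> (A - P) = {}"
      using prime_avoid[OF assms(1) _ one zero mc] AC by blast
    then show ?thesis by blast
  qed
  show ?thesis
  proof (intro conjI allI impI)
    fix P assume mP: "minimal_prime P (B\<lparr>carrier := A\<rparr>)"
    then have P: "primeideal P (B\<lparr>carrier := A\<rparr>)"
      and Pmin: "\<And>Q. primeideal Q (B\<lparr>carrier := A\<rparr>) \<Longrightarrow> Q \<subseteq> P \<Longrightarrow> Q = P"
      unfolding minimal_prime_def by auto
    obtain Q' where Q': "primeideal Q' B" "Q' \<inter> A \<subseteq> P" using under[OF P] by blast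
    have eq1: "Q' \<inter> A = P" using Pmin[OF contr[OF Q'(1)] Q'(2)] .
    obtain Q0 where Q0: "minimal_prime Q0 B" "Q0 \<subseteq> Q'"
      using min_prime_exists[OF assms(1) Q'(1)] by blast
    have Q0p: "primeideal Q0 B" using Q0(1) unfolding minimal_prime_def by simp
    have "Q0 \<inter> A \<subseteq> P" using Q0(2) eq1 by blast
    then have eq0: "P = Q0 \<inter> A" using Pmin[OF contr[OF Q0p]] by simp
    show "\<exists>!Q. minimal_prime Q B \<and> P = Q \<inter> A"
    proof (rule ex1I[of _ Q0])
      show "minimal_prime Q0 B \<and> P = Q0 \<inter> A" using Q0(1) eq0 by simp
    next
      fix Q assume q: "minimal_prime Q B \<and> P = Q \<inter> A"
      then have qp: "primeideal Q B" unfolding minimal_prime_def by simp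
      have "Q \<subseteq> Q0" using emb[OF qp Q0p] q eq0 by blast
      moreover have "Q0 \<subseteq> Q" using emb[OF Q0p qp] q eq0 by blast
      ultimately show "Q = Q0" by blast
    qed
  next
    fix Q assume mQ: "minimal_prime Q B"
    then have Q: "primeideal Q B" and Qmin: "\<And>Q'. primeideal Q' B \<Longrightarrow> Q' \<subseteq> Q \<Longrightarrow> Q' = Q"
      unfolding minimal_prime_def by auto
    show "minimal_prime (Q \<inter> A) (B\<lparr>carrier := A\<rparr>)"
      unfolding minimal_prime_def
    proof (intro conjI allI impI)
      show "primeideal (Q \<inter> A) (B\<lparr>carrier := A\<rparr>)" using contr[OF Q] .
      fix P assume PP: "primeideal P (B\<lparr>carrier := A\<rparr>) \<and> P \<subseteq> Q \<inter> A"
      obtain Q' where Q': "primeideal Q' B" "Q' \<inter> A \<subseteq> P" using under PP by blast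
      have "Q' \<inter> A \<subseteq> Q \<inter> A" using Q'(2) PP by blast
      then have "Q' \<subseteq> Q" using emb[OF Q'(1) Q] by simp
      then have "Q' = Q" using Qmin[OF Q'(1)] by simp
      then show "P = Q \<inter> A" using Q'(2) PP by blast
    qed
  qed
qed

end
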